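(* An effect algebra $A$ satisfies the Riesz decomposition property if and only if the category of elements $\int R(A)$ is amalgamated.
   Context: An effect algebra is a partial algebra $(A;+,0,1)$, with a binary partial operation $+$ and constants $0,1$, satisfying: (E1) if $a+b$ is defined, then $b+a$ is defined and $a+b=b+a$; (E2) if $a+b$ and $(a+b)+c$ are defined, then $b+c$ and $a+(b+c)$ are defined and $(a+b)+c=a+(b+c)$; (E3) for every $a$ there is a unique $a^\perp$ such that $a+a^\perp=1$; (E4) if $a+1$ is defined, then $a=0$. One-element effect algebras are allowed. The order is given by $a\le b$ iff $a+c=b$ for some $c$. Morphisms of effect algebras preserve $1$ and defined sums; $\mathbf{EA}$ is the category of effect algebras. $A$ has the Riesz decomposition property if for all $u,v_1,v_2\in A$ with $u\le v_1+v_2$ there exist $u_1\le v_1$ and $u_2\le v_2$ with $u=u_1+u_2$. Boolean algebras are effect algebras via: $x+y$ is defined iff $x\wedge y=0$, and then $x+y=x\vee y$. For $[n]=\{1,\dots,n\}$, $\mathbf{FinBool}$ is the full subcategory of Boolean algebras on the objects $2^{[n]}$, $n\in\mathbb N$. The category $\int R(A)$ has: - objects: pairs $(2^{[n]},g)$ with $g\colon 2^{[n]}\to A$ an effect-algebra morphism; - arrows $(2^{[n]},g)\to(2^{[n']},g')$: Boolean algebra morphisms $f\colon 2^{[n]}\to 2^{[n']}$ with $g'\circ f=g$. A category is amalgamated if every span $X_1\leftarrow X\rightarrow X_2$ in it can be completed to a commutative square. *)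

theory Defs
  imports Main
begin

text \<open>An effect algebra on the whole type 'a: partial sum pl (None = undefined), zero z, unit u.\<close>
definition effect_algebra :: "('a \<Rightarrow> 'a \<Rightarrow> 'a option) \<Rightarrow> 'a \<Rightarrow> 'a \<Rightarrow> bool" where
  "effect_algebra pl z u \<longleftrightarrow>
     (\<forall>a b. pl a b \<noteq> None \<longrightarrow> pl b a \<noteq> None \<and> pl a b = pl b a) \<and>
     (\<forall>a b c d. pl a b = Some d \<and> pl d c \<noteq> None \<longrightarrow>
        (\<exists>e. pl b c = Some e \<and> pl a e \<noteq> None \<and> pl d c = pl a e)) \<and>
     (\<forall>a. \<exists>!b. pl a b = Some u) \<and>
     (\<forall>a. pl a u \<noteq> None \<longrightarrow> a = z)"

definition ea_le :: "('a \<Rightarrow> 'a \<Rightarrow> 'a option) \<Rightarrow> 'a \<Rightarrow> 'a \<Rightarrow> bool" where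
  "ea_le pl a b \<longleftrightarrow> (\<exists>c. pl a c = Some b)"

definition riesz_decomposition :: "('a \<Rightarrow> 'a \<Rightarrow> 'a option) \<Rightarrow> bool" where
  "riesz_decomposition pl \<longleftrightarrow>
     (\<forall>x v1 v2 s. pl v1 v2 = Some s \<and> ea_le pl x s \<longrightarrow>
        (\<exists>x1 x2. ea_le pl x1 v1 \<and> ea_le pl x2 v2 \<and> pl x1 x2 = Some x))"

text \<open>The finite Boolean algebra 2^[n] has carrier Pow {1..n}.
  Effect-algebra morphisms 2^[n] -> A (only values on the carrier matter).\<close>
definition ea_hom_from_pow :: "('a \<Rightarrow> 'a \<Rightarrow> 'a option) \<Rightarrow> 'a \<Rightarrow> nat \<Rightarrow> (nat set \<Rightarrow> 'a) \<Rightarrow> bool" where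
  "ea_hom_from_pow pl u n g \<longleftrightarrow>
     g {1..n} = u \<and>
     (\<forall>X Y. X \<subseteq> {1..n} \<and> Y \<subseteq> {1..n} \<and> X \<inter> Y = {} \<longrightarrow> pl (g X) (g Y) = Some (g (X \<union> Y)))"

definition bool_hom :: "nat \<Rightarrow> nat \<Rightarrow> (nat set \<Rightarrow> nat set) \<Rightarrow> bool" where
  "bool_hom n m f \<longleftrightarrow>
     (\<forall>X. X \<subseteq> {1..n} \<longrightarrow> f X \<subseteq> {1..m}) \<and>
     f {} = {} \<and> f {1..n} = {1..m} \<and>
     (\<forall>X Y. X \<subseteq> {1..n} \<and> Y \<subseteq> {1..n} \<longrightarrow> f (X \<union> Y) = f X \<union> f Y \<and> f (X \<inter> Y) = f X \<inter> f Y) \<and>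
     (\<forall>X. X \<subseteq> {1..n} \<longrightarrow> f ({1..n} - X) = {1..m} - f X)"

text \<open>Objects of \<integral>R(A): pairs (n, g) with g an effect-algebra morphism 2^[n] -> A.\<close>
definition elem_obj :: "('a \<Rightarrow> 'a \<Rightarrow> 'a option) \<Rightarrow> 'a \<Rightarrow> nat \<times> (nat set \<Rightarrow> 'a) \<Rightarrow> bool" where
  "elem_obj pl u ob \<longleftrightarrow> ea_hom_from_pow pl u (fst ob) (snd ob)"

definition elem_arr :: "nat \<times> (nat set \<Rightarrow> 'a) \<Rightarrow> nat \<times> (nat set \<Rightarrow> 'a) \<Rightarrow> (nat set \<Rightarrow> nat set) \<Rightarrow> bool" where
  "elem_arr ob ob' f \<longleftrightarrow> bool_hom (fst ob) (fst ob') f \<and>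
     (\<forall>X. X \<subseteq> {1..fst ob} \<longrightarrow> snd ob' (f X) = snd ob X)"

text \<open>\<integral>R(A) is amalgamated: every span can be completed to a commutative square
  (arrows with the same domain are equal iff they agree on the carrier).\<close>
definition elem_cat_amalgamated :: "('a \<Rightarrow> 'a \<Rightarrow> 'a option) \<Rightarrow> 'a \<Rightarrow> bool" where
  "elem_cat_amalgamated pl u \<longleftrightarrow>
     (\<forall>ob ob1 ob2 f1 f2.
        elem_obj pl u ob \<and> elem_obj pl u ob1 \<and> elem_obj pl u ob2 \<and>
        elem_arr ob ob1 f1 \<and> elem_arr ob ob2 f2 \<longrightarrow>
        (\<exists>ob3 k1 k2. elem_obj pl u ob3 \<and> elem_arr ob1 ob3 k1 \<and> elem_arr ob2 ob3 k2 \<and>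
           (\<forall>X. X \<subseteq> {1..fst ob} \<longrightarrow> k1 (f1 X) = k2 (f2 X))))"

end

theory Submission
  imports Defs
begin


locale EA =
  fixes pl :: "'a \<Rightarrow> 'a \<Rightarrow> 'a option" and z u :: 'a
  assumes ea: "effect_algebra pl z u"
begin

lemma comm: "pl a b = pl b a"
  using ea unfolding effect_algebra_def by (metis)

lemma assoc: "pl a b = Some d \<Longrightarrow> pl d c = Some r \<Longrightarrow> \<exists>e. pl b c = Some e \<and> pl a e = Some r"
  using ea unfolding effect_algebra_def by (metis option.distinct(1))

lemma assoc': "pl b c = Some e \<Longrightarrow> pl a e = Some r \<Longrightarrow> \<exists>d. pl a b = Some d \<and> pl d c = Some r"
proof -
  assume h1: "pl b c = Some e" and h2: "pl a e = Some r"
  have "pl c b = Some e" using h1 comm by simp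
  moreover have "pl e a = Some r" using h2 comm by simp
  ultimately obtain d where "pl b a = Some d" "pl c d = Some r" using assoc by blast
  then show ?thesis using comm by metis
qed

lemma compl_unique: "pl a b = Some u \<Longrightarrow> pl a c = Some u \<Longrightarrow> b = c"
  using ea unfolding effect_algebra_def by metis

lemma compl_ex: "\<exists>b. pl a b = Some u"
  using ea unfolding effect_algebra_def by metis

lemma E4: "pl a u \<noteq> None \<Longrightarrow> a = z"
  using ea unfolding effect_algebra_def by metis

lemma zero_one: "pl z u = Some u"
proof -
  obtain c where c: "pl u c = Some u" using compl_ex by blast
  then have "pl c u \<noteq> None" using comm by simp
  then have "c = z" using E4 by blast
  then show ?thesis using c comm by simp
qed

lemma zero_left: "pl z a = Some a"
proof -
  obtain c where c: "pl a c = Some u" using compl_ex by blast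
  obtain d where d: "pl z a = Some d" "pl d c = Some u" using assoc'[OF c zero_one] by blast
  have "pl c d = Some u" "pl c a = Some u" using d c comm by simp_all
  then have "d = a" using compl_unique by blast
  then show ?thesis using d by simp
qed

lemma zero_right: "pl a z = Some a"
  using zero_left comm by simp

lemma cancel: "pl a b = Some s \<Longrightarrow> pl a c = Some s \<Longrightarrow> b = c"
proof -
  assume h1: "pl a b = Some s" and h2: "pl a c = Some s"
  obtain w where w: "pl s w = Some u" using compl_ex by blast
  have "pl b a = Some s" "pl c a = Some s" using h1 h2 comm by simp_all
  then have ba: "pl b a = Some s" and ca: "pl c a = Some s" by simp_all
  obtain e where e: "pl a w = Some e" "pl b e = Some u" using assoc[OF ba w] by blast
  obtain e' where e': "pl a w = Some e'" "pl c e' = Some u" using assoc[OF ca w] by blast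
  have "e = e'" using e e' by simp
  then have "pl e b = Some u" "pl e c = Some u" using e e' comm by simp_all
  then show "b = c" using compl_unique by blast
qed

lemma positive: "pl a b = Some z \<Longrightarrow> b = z"
proof -
  assume h: "pl a b = Some z"
  obtain e where "pl b u = Some e" using assoc[OF h zero_one] by blast
  then show "b = z" using E4 by simp
qed

lemma positive': "pl a b = Some z \<Longrightarrow> a = z"
  using positive comm by metis

lemma rearr: "pl a b = Some p \<Longrightarrow> pl c d = Some q \<Longrightarrow> pl p q = Some r \<Longrightarrow>
   \<exists>p' q'. pl a c = Some p' \<and> pl b d = Some q' \<and> pl p' q' = Some r"
proof -
  assume h1: "pl a b = Some p" and h2: "pl c d = Some q" and h3: "pl p q = Some r"
  obtain e where e: "pl b q = Some e" "pl a e = Some r" using assoc[OF h1 h3] by blast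
  obtain f where f: "pl b c = Some f" "pl f d = Some e" using assoc'[OF h2 e(1)] by blast
  have "pl c b = Some f" using f comm by simp
  then obtain q' where q': "pl b d = Some q'" "pl c q' = Some e" using assoc f(2) by blast
  obtain p' where "pl a c = Some p'" "pl p' q' = Some r" using assoc'[OF q'(2) e(2)] by blast
  then show ?thesis using q' by blast
qed

inductive has_sum :: "('b \<Rightarrow> 'a) \<Rightarrow> 'b set \<Rightarrow> 'a \<Rightarrow> bool" where
  hs_empty: "has_sum a {} z"
| hs_insert: "has_sum a I s \<Longrightarrow> i \<notin> I \<Longrightarrow> pl s (a i) = Some t \<Longrightarrow> has_sum a (insert i I) t"

lemma hs_finite: "has_sum a I s \<Longrightarrow> finite I"
  by (induction rule: has_sum.induct) auto

lemma hs_cong: "has_sum a I s \<Longrightarrow> (\<forall>i\<in>I. a i = b i) \<Longrightarrow> has_sum b I s"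
  by (induction rule: has_sum.induct) (auto intro: has_sum.intros)

lemma hs_remove: "has_sum a J t \<Longrightarrow> i \<in> J \<Longrightarrow> \<exists>s. has_sum a (J - {i}) s \<and> pl s (a i) = Some t"
proof (induction arbitrary: i rule: has_sum.induct)
  case (hs_empty a)
  then show ?case by simp
next
  case (hs_insert a I s j t)
  show ?case
  proof (cases "i = j")
    case True
    then show ?thesis using hs_insert by auto
  next
    case False
    then have "i \<in> I" using hs_insert by auto
    then obtain s0 where s0: "has_sum a (I - {i}) s0" "pl s0 (a i) = Some s" using hs_insert by blast
    obtain e where e: "pl (a i) (a j) = Some e" "pl s0 e = Some t" using assoc[OF s0(2) hs_insert(3)] by blast
    have "pl (a j) (a i) = Some e" using e comm by simp
    then obtain r where r: "pl s0 (a j) = Some r" "pl r (a i) = Some t" using assoc' e(2) by blast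
    have "has_sum a (insert j (I - {i})) r" using s0 r hs_insert(2) by (auto intro: has_sum.intros)
    moreover have "insert j (I - {i}) = insert j I - {i}" using False by auto
    ultimately show ?thesis using r by auto
  qed
qed

lemma hs_insert_iff: "i \<notin> I \<Longrightarrow> has_sum a (insert i I) t \<Longrightarrow> \<exists>s. has_sum a I s \<and> pl s (a i) = Some t"
  using hs_remove[of a "insert i I" t i] by auto

lemma hs_empty_iff: "has_sum a {} s \<Longrightarrow> s = z"
  by (cases rule: has_sum.cases) auto

lemma hs_unique: "has_sum a I s \<Longrightarrow> has_sum a I t \<Longrightarrow> s = t"
proof (induction arbitrary: t rule: has_sum.induct)
  case (hs_empty a)
  then show ?case using hs_empty_iff by metis
next
  case (hs_insert a I s i t t')
  obtain s' where "has_sum a I s'" "pl s' (a i) = Some t'" using hs_insert_iff[OF hs_insert.hyps(2) hs_insert.prems] by blast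
  then show ?case using hs_insert by fastforce
qed

lemma hs_single: "has_sum a {i} (a i)"
  using hs_insert[OF hs_empty, of i a "a i"] zero_left by simp

lemma hs_union: "has_sum a J t \<Longrightarrow> I \<inter> J = {} \<Longrightarrow> has_sum a I s \<Longrightarrow> pl s t = Some r \<Longrightarrow> has_sum a (I \<union> J) r"
proof (induction arbitrary: r rule: has_sum.induct)
  case (hs_empty a)
  then show ?case using zero_right by auto
next
  case (hs_insert a J t' j t)
  obtain r' where r': "pl s t' = Some r'" "pl r' (a j) = Some r" using assoc'[OF hs_insert(3) hs_insert(7)] by blast
  have "has_sum a (I \<union> J) r'" using hs_insert r' by auto
  moreover have "j \<notin> I \<union> J" using hs_insert by auto
  ultimately have "has_sum a (insert j (I \<union> J)) r" using r' by (auto intro: has_sum.intros)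
  then show ?case by simp
qed

lemma hs_split_aux: "finite J \<Longrightarrow> I \<inter> J = {} \<Longrightarrow> has_sum a (I \<union> J) r \<Longrightarrow>
   \<exists>s t. has_sum a I s \<and> has_sum a J t \<and> pl s t = Some r"
proof (induction arbitrary: r rule: finite_induct)
  case empty
  then show ?case using zero_right hs_empty by auto
next
  case (insert j J)
  have "I \<union> insert j J = insert j (I \<union> J)" by auto
  moreover have "j \<notin> I \<union> J" using insert by auto
  ultimately obtain r0 where r0: "has_sum a (I \<union> J) r0" "pl r0 (a j) = Some r"
    using hs_insert_iff insert by metis
  have IJ: "I \<inter> J = {}" using insert by auto
  obtain s t0 where st: "has_sum a I s" "has_sum a J t0" "pl s t0 = Some r0" using insert.IH[OF IJ r0(1)] by blast
  obtain t where t: "pl t0 (a j) = Some t" "pl s t = Some r" using assoc[OF st(3) r0(2)] by blast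
  have "has_sum a (insert j J) t" using st t insert by (auto intro: has_sum.intros)
  then show ?case using st t by blast
qed

lemma hs_split: "I \<inter> J = {} \<Longrightarrow> has_sum a (I \<union> J) r \<Longrightarrow>
   \<exists>s t. has_sum a I s \<and> has_sum a J t \<and> pl s t = Some r"
proof -
  assume a1: "I \<inter> J = {}" and a2: "has_sum a (I \<union> J) r"
  have "finite J" using hs_finite[OF a2] by simp
  then show ?thesis using hs_split_aux[OF _ a1 a2] by blast
qed

lemma hs_subset: "has_sum a I r \<Longrightarrow> X \<subseteq> I \<Longrightarrow> \<exists>s. has_sum a X s"
proof -
  assume "has_sum a I r" "X \<subseteq> I"
  moreover have "I = X \<union> (I - X)" using \<open>X \<subseteq> I\<close> by auto
  ultimately show ?thesis using hs_split[of X "I - X" a r] by auto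
qed

lemma hs_reindex1: "has_sum b K s \<Longrightarrow> (\<forall>k\<in>K. b k = a (h k)) \<Longrightarrow> inj_on h K \<Longrightarrow> has_sum a (h ` K) s"
proof (induction rule: has_sum.induct)
  case (hs_empty a)
  then show ?case by (auto intro: has_sum.intros)
next
  case (hs_insert b I s i t)
  have "h i \<notin> h ` I" using hs_insert by auto
  then show ?case using hs_insert by (auto intro: has_sum.intros)
qed

lemma hs_reindex2: "finite K \<Longrightarrow> has_sum a (h ` K) s \<Longrightarrow> inj_on h K \<Longrightarrow> has_sum (\<lambda>k. a (h k)) K s"
proof (induction arbitrary: s rule: finite_induct)
  case empty
  then show ?case using hs_empty_iff hs_empty by auto
next
  case (insert k K)
  have "h k \<notin> h ` K" using insert by auto
  then obtain s0 where "has_sum a (h ` K) s0" "pl s0 (a (h k)) = Some s"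
    using hs_insert_iff insert by (metis image_insert)
  then show ?case using insert by (auto intro: has_sum.intros)
qed

lemma hs_zero: "has_sum c K z \<Longrightarrow> k \<in> K \<Longrightarrow> c k = z"
proof -
  assume a1: "has_sum c K z" and a2: "k \<in> K"
  obtain s where "pl s (c k) = Some z" using hs_remove[OF a1 a2] by blast
  then show ?thesis using positive by blast
qed

lemma hs_UN: "finite Y \<Longrightarrow> (\<forall>i\<in>Y. \<forall>j\<in>Y. i \<noteq> j \<longrightarrow> F i \<inter> F j = {}) \<Longrightarrow>
  (\<forall>i\<in>Y. has_sum b (F i) (a i)) \<Longrightarrow> has_sum a Y s \<Longrightarrow> has_sum b (\<Union>i\<in>Y. F i) s"
proof (induction arbitrary: s rule: finite_induct)
  case empty
  then show ?case using hs_empty_iff hs_empty by auto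
next
  case (insert y Y)
  obtain s0 where s0: "has_sum a Y s0" "pl s0 (a y) = Some s" using hs_insert_iff insert by metis
  have h1: "has_sum b (\<Union>i\<in>Y. F i) s0" using insert s0 by auto
  have h2: "(\<Union>i\<in>Y. F i) \<inter> F y = {}" using insert by auto
  have h3: "has_sum b (F y) (a y)" using insert.prems by auto
  have "has_sum b ((\<Union>i\<in>Y. F i) \<union> F y) s" using hs_union[OF h3 h2 h1 s0(2)] .
  then show ?case by (simp add: Un_commute)
qed

end


context EA
begin

lemma hs_pointwise: "finite K \<Longrightarrow> (\<forall>k\<in>K. pl (e k) (c' k) = Some (c k)) \<Longrightarrow> has_sum c K S \<Longrightarrow>
   \<exists>E C'. has_sum e K E \<and> has_sum c' K C' \<and> pl E C' = Some S"
proof (induction arbitrary: S rule: finite_induct)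
  case empty
  then show ?case using hs_empty_iff hs_empty zero_left by metis
next
  case (insert k K)
  obtain S0 where S0: "has_sum c K S0" "pl S0 (c k) = Some S" using hs_insert_iff insert by metis
  have allK: "\<forall>k\<in>K. pl (e k) (c' k) = Some (c k)" using insert.prems by auto
  have ek: "pl (e k) (c' k) = Some (c k)" using insert.prems by auto
  obtain E0 C0 where EC: "has_sum e K E0" "has_sum c' K C0" "pl E0 C0 = Some S0" using insert.IH[OF allK S0(1)] by blast
  obtain p q where pq: "pl E0 (e k) = Some p" "pl C0 (c' k) = Some q" "pl p q = Some S"
    using rearr[OF EC(3) ek S0(2)] by blast
  have "has_sum e (insert k K) p" "has_sum c' (insert k K) q" using pq EC insert by (auto intro: has_sum.intros)
  then show ?case using pq by blast
qed

lemma rdp_sum: "finite K \<Longrightarrow> riesz_decomposition pl \<Longrightarrow> has_sum c K S \<Longrightarrow> ea_le pl x S \<Longrightarrow>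
   \<exists>e c'. (\<forall>k\<in>K. pl (e k) (c' k) = Some (c k)) \<and> has_sum e K x"
proof (induction arbitrary: x S rule: finite_induct)
  case empty
  then have "x = z" using hs_empty_iff positive' unfolding ea_le_def by blast
  then show ?case using hs_empty by auto
next
  case (insert k K)
  obtain S0 where S0: "has_sum c K S0" "pl S0 (c k) = Some S" using hs_insert_iff insert by metis
  obtain x1 x2 where x: "ea_le pl x1 S0" "ea_le pl x2 (c k)" "pl x1 x2 = Some x"
    using insert.prems(1) insert.prems(3) S0(2) unfolding riesz_decomposition_def by blast
  obtain e c' where ec: "\<forall>k\<in>K. pl (e k) (c' k) = Some (c k)" "has_sum e K x1"
    using insert.IH[OF insert.prems(1) S0(1) x(1)] by blast
  obtain r where r: "pl x2 r = Some (c k)" using x(2) unfolding ea_le_def by blast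
  have "has_sum (e(k := x2)) K x1" using hs_cong[OF ec(2)] insert.hyps(2) by auto
  then have "has_sum (e(k := x2)) (insert k K) x" using x(3) insert.hyps(2) by (auto intro: has_sum.intros)
  moreover have "\<forall>j\<in>insert k K. pl ((e(k := x2)) j) ((c'(k := r)) j) = Some (c j)" using ec r by auto
  ultimately show ?case by blast
qed

lemma refine: "finite J \<Longrightarrow> riesz_decomposition pl \<Longrightarrow> finite K \<Longrightarrow> has_sum b J s \<Longrightarrow> has_sum c K s \<Longrightarrow>
   \<exists>d. (\<forall>j\<in>J. has_sum (\<lambda>k. d (j,k)) K (b j)) \<and> (\<forall>k\<in>K. has_sum (\<lambda>j. d (j,k)) J (c k))"
proof (induction arbitrary: s c rule: finite_induct)
  case empty
  have "s = z" using hs_empty_iff[OF empty.prems(3)] .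
  then have cz: "has_sum c K z" using empty.prems(4) by simp
  have "\<forall>k\<in>K. c k = z" using hs_zero[OF cz] by blast
  then show ?case using hs_empty by auto
next
  case (insert j J)
  obtain s0 where s0: "has_sum b J s0" "pl s0 (b j) = Some s" using hs_insert_iff[OF insert.hyps(2) insert.prems(3)] by blast
  have le: "ea_le pl (b j) s" using s0 comm unfolding ea_le_def by metis
  obtain e c' where ec: "\<forall>k\<in>K. pl (e k) (c' k) = Some (c k)" "has_sum e K (b j)"
    using rdp_sum[OF insert.prems(2) insert.prems(1) insert.prems(4) le] by blast
  obtain E C' where EC: "has_sum e K E" "has_sum c' K C'" "pl E C' = Some s"
    using hs_pointwise[OF insert.prems(2) ec(1) insert.prems(4)] by blast
  have "E = b j" using hs_unique EC ec by blast
  moreover have "pl (b j) s0 = Some s" using s0 comm by simp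
  ultimately have "C' = s0" using cancel EC by blast
  then obtain d' where d': "\<forall>j\<in>J. has_sum (\<lambda>k. d' (j,k)) K (b j)" "\<forall>k\<in>K. has_sum (\<lambda>j. d' (j,k)) J (c' k)"
    using insert.IH[OF insert.prems(1) insert.prems(2) s0(1)] EC(2) by blast
  define d where "d = (\<lambda>(j0,k). if j0 = j then e k else d' (j0,k))"
  have rows: "\<forall>j0\<in>insert j J. has_sum (\<lambda>k. d (j0,k)) K (b j0)"
  proof
    fix j0 assume j0: "j0 \<in> insert j J"
    show "has_sum (\<lambda>k. d (j0,k)) K (b j0)"
    proof (cases "j0 = j")
      case True
      then show ?thesis using ec(2) hs_cong unfolding d_def by auto
    next
      case False
      then have "j0 \<in> J" using j0 by auto
      then show ?thesis using d' False hs_cong[of "\<lambda>k. d' (j0,k)" K "b j0"] unfolding d_def by auto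
    qed
  qed
  have cols: "\<forall>k\<in>K. has_sum (\<lambda>j0. d (j0,k)) (insert j J) (c k)"
  proof
    fix k assume k: "k \<in> K"
    have "has_sum (\<lambda>j0. d (j0,k)) J (c' k)"
      using d' k hs_cong[of "\<lambda>j0. d' (j0,k)" J "c' k"] insert.hyps(2) unfolding d_def by auto
    moreover have "pl (c' k) (d (j,k)) = Some (c k)" using ec k comm unfolding d_def by auto
    ultimately show "has_sum (\<lambda>j0. d (j0,k)) (insert j J) (c k)" using insert.hyps(2) by (auto intro: has_sum.intros)
  qed
  show ?case using rows cols by blast
qed

lemma hom_empty: "ea_hom_from_pow pl u n g \<Longrightarrow> g {} = z"
proof -
  assume "ea_hom_from_pow pl u n g"
  then have "pl (g {}) (g {}) = Some (g {})" unfolding ea_hom_from_pow_def by auto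
  then show ?thesis using cancel zero_right by metis
qed

lemma hom_sum: "ea_hom_from_pow pl u n g \<Longrightarrow> X \<subseteq> {1..n} \<Longrightarrow> has_sum (\<lambda>i. g {i}) X (g X)"
proof -
  assume h: "ea_hom_from_pow pl u n g" and X: "X \<subseteq> {1..n}"
  have "finite X" using X finite_subset by blast
  then show ?thesis using X
  proof (induction rule: finite_induct)
    case empty
    then show ?case using hom_empty[OF h] hs_empty by simp
  next
    case (insert i X)
    then have "pl (g X) (g {i}) = Some (g (X \<union> {i}))" using h unfolding ea_hom_from_pow_def by auto
    then show ?case using insert by (auto intro: has_sum.intros)
  qed
qed

definition G :: "(nat \<Rightarrow> 'a) \<Rightarrow> nat set \<Rightarrow> 'a" where
  "G a X = (THE s. has_sum a X s)"

lemma G_sum: "has_sum a I r \<Longrightarrow> X \<subseteq> I \<Longrightarrow> has_sum a X (G a X)"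
proof -
  assume "has_sum a I r" "X \<subseteq> I"
  then obtain s where s: "has_sum a X s" using hs_subset by blast
  then have "G a X = s" unfolding G_def using hs_unique by blast
  then show ?thesis using s by simp
qed

lemma G_obj: "has_sum a {1..n} u \<Longrightarrow> ea_hom_from_pow pl u n (G a) \<and> (\<forall>i\<in>{1..n}. G a {i} = a i)"
proof -
  assume h: "has_sum a {1..n} u"
  have top: "G a {1..n} = u" using G_sum[OF h] h hs_unique by blast
  have add: "pl (G a X) (G a Y) = Some (G a (X \<union> Y))" if hX: "X \<subseteq> {1..n}" and hY: "Y \<subseteq> {1..n}" and hXY: "X \<inter> Y = {}" for X Y
  proof -
    have XY: "has_sum a (X \<union> Y) (G a (X \<union> Y))" using G_sum[OF h] hX hY by auto
    obtain s t where st: "has_sum a X s" "has_sum a Y t" "pl s t = Some (G a (X \<union> Y))"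
      using hs_split[OF hXY XY] by blast
    have "s = G a X" using st(1) G_sum[OF h hX] hs_unique by blast
    moreover have "t = G a Y" using st(2) G_sum[OF h hY] hs_unique by blast
    ultimately show ?thesis using st by simp
  qed
  have "G a {i} = a i" if "i \<in> {1..n}" for i
  proof -
    have "{i} \<subseteq> {1..n}" using that by simp
    then show ?thesis using hs_unique[OF G_sum[OF h] hs_single] by blast
  qed
  then show ?thesis using top add unfolding ea_hom_from_pow_def by auto
qed

definition pre :: "(nat \<Rightarrow> nat) \<Rightarrow> nat \<Rightarrow> nat set \<Rightarrow> nat set" where
  "pre \<phi> m X = {j\<in>{1..m}. \<phi> j \<in> X}"

lemma pre_bool_hom: "(\<forall>j\<in>{1..m}. \<phi> j \<in> {1..n}) \<Longrightarrow> bool_hom n m (pre \<phi> m)"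
  unfolding bool_hom_def pre_def by auto

lemma pre_arrow:
  assumes g: "ea_hom_from_pow pl u n g" and g': "ea_hom_from_pow pl u m g'"
    and phi: "\<forall>j\<in>{1..m}. \<phi> j \<in> {1..n}"
    and fib: "\<forall>i\<in>{1..n}. has_sum (\<lambda>j. g' {j}) {j\<in>{1..m}. \<phi> j = i} (g {i})"
  shows "elem_arr (n, g) (m, g') (pre \<phi> m)"
proof -
  have "g' (pre \<phi> m X) = g X" if X: "X \<subseteq> {1..n}" for X
  proof -
    have "finite X" using X finite_subset by blast
    moreover have "\<forall>i\<in>X. \<forall>j\<in>X. i \<noteq> j \<longrightarrow> {j'\<in>{1..m}. \<phi> j' = i} \<inter> {j'\<in>{1..m}. \<phi> j' = j} = {}" by auto
    moreover have "\<forall>i\<in>X. has_sum (\<lambda>j. g' {j}) {j\<in>{1..m}. \<phi> j = i} (g {i})" using fib X by auto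
    moreover have "has_sum (\<lambda>i. g {i}) X (g X)" using hom_sum[OF g X] .
    ultimately have "has_sum (\<lambda>j. g' {j}) (\<Union>i\<in>X. {j\<in>{1..m}. \<phi> j = i}) (g X)" by (rule hs_UN)
    moreover have "(\<Union>i\<in>X. {j\<in>{1..m}. \<phi> j = i}) = pre \<phi> m X" unfolding pre_def by auto
    ultimately have "has_sum (\<lambda>j. g' {j}) (pre \<phi> m X) (g X)" by simp
    moreover have "pre \<phi> m X \<subseteq> {1..m}" unfolding pre_def by auto
    then have "has_sum (\<lambda>j. g' {j}) (pre \<phi> m X) (g' (pre \<phi> m X))"
      using hom_sum[OF g'] by blast
    ultimately show ?thesis using hs_unique by blast
  qed
  then show ?thesis unfolding elem_arr_def using pre_bool_hom[OF phi] by auto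
qed

end

lemma bh_sub: "bool_hom n m f \<Longrightarrow> X \<subseteq> {1..n} \<Longrightarrow> f X \<subseteq> {1..m}"
  by (simp add: bool_hom_def)
lemma bh_empty: "bool_hom n m f \<Longrightarrow> f {} = {}"
  by (simp add: bool_hom_def)
lemma bh_top: "bool_hom n m f \<Longrightarrow> f {1..n} = {1..m}"
  by (simp add: bool_hom_def)
lemma bh_un: "bool_hom n m f \<Longrightarrow> X \<subseteq> {1..n} \<Longrightarrow> Y \<subseteq> {1..n} \<Longrightarrow> f (X \<union> Y) = f X \<union> f Y"
  by (simp add: bool_hom_def)
lemma bh_int: "bool_hom n m f \<Longrightarrow> X \<subseteq> {1..n} \<Longrightarrow> Y \<subseteq> {1..n} \<Longrightarrow> f (X \<inter> Y) = f X \<inter> f Y"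
  by (simp add: bool_hom_def)

lemma bool_hom_UN: "bool_hom n m f \<Longrightarrow> X \<subseteq> {1..n} \<Longrightarrow> f X = (\<Union>i\<in>X. f {i})"
proof -
  assume f: "bool_hom n m f" and X: "X \<subseteq> {1..n}"
  have "finite X" using X finite_subset by blast
  then show ?thesis using X
  proof (induction rule: finite_induct)
    case empty
    then show ?case using bh_empty[OF f] by simp
  next
    case (insert i X)
    have "{i} \<subseteq> {1..n}" "X \<subseteq> {1..n}" using insert.prems by auto
    then have "f ({i} \<union> X) = f {i} \<union> f X" using bh_un[OF f] by blast
    then show ?case using insert by simp
  qed
qed

lemma bool_hom_rep:
  assumes f: "bool_hom n m f"
  shows "\<exists>\<phi>. (\<forall>j\<in>{1..m}. \<phi> j \<in> {1..n}) \<and> (\<forall>X. X \<subseteq> {1..n} \<longrightarrow> f X = {j\<in>{1..m}. \<phi> j \<in> X})"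
proof -
  define \<phi> where "\<phi> j = (SOME i. i \<in> {1..n} \<and> j \<in> f {i})" for j
  have ex: "\<exists>i. i \<in> {1..n} \<and> j \<in> f {i}" if "j \<in> {1..m}" for j
  proof -
    have "j \<in> f {1..n}" using that bh_top[OF f] by simp
    then show ?thesis using bool_hom_UN[OF f, of "{1..n}"] by auto
  qed
  have phi: "\<phi> j \<in> {1..n} \<and> j \<in> f {\<phi> j}" if "j \<in> {1..m}" for j
    unfolding \<phi>_def using someI_ex[OF ex[OF that]] .
  have uniq: "i = i'" if "i \<in> {1..n}" "i' \<in> {1..n}" "j \<in> f {i}" "j \<in> f {i'}" for i i' j
  proof (rule ccontr)
    assume "i \<noteq> i'"
    then have "{i} \<inter> {i'} = {}" by auto
    moreover have "f ({i} \<inter> {i'}) = f {i} \<inter> f {i'}" using bh_int[OF f] that by simp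
    ultimately have "f {i} \<inter> f {i'} = {}" using bh_empty[OF f] by simp
    then show False using that by auto
  qed
  have sub: "f {i} \<subseteq> {1..m}" if "i \<in> {1..n}" for i using bh_sub[OF f] that by simp
  have "f X = {j\<in>{1..m}. \<phi> j \<in> X}" if X: "X \<subseteq> {1..n}" for X
  proof -
    have "f X = (\<Union>i\<in>X. f {i})" using bool_hom_UN[OF f X] .
    also have "\<dots> = {j\<in>{1..m}. \<phi> j \<in> X}"
    proof
      show "(\<Union>i\<in>X. f {i}) \<subseteq> {j \<in> {1..m}. \<phi> j \<in> X}"
      proof
        fix j assume "j \<in> (\<Union>i\<in>X. f {i})"
        then obtain i where i: "i \<in> X" "j \<in> f {i}" by auto
        have iin: "i \<in> {1..n}" using i X by blast
        have jm: "j \<in> {1..m}" using sub[OF iin] i(2) by blast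
        then have "\<phi> j = i" using uniq phi i X by blast
        then show "j \<in> {j \<in> {1..m}. \<phi> j \<in> X}" using jm i by auto
      qed
    next
      show "{j \<in> {1..m}. \<phi> j \<in> X} \<subseteq> (\<Union>i\<in>X. f {i})" using phi by auto
    qed
    finally show ?thesis .
  qed
  then show ?thesis using phi by blast
qed



context EA
begin

lemma transport:
  fixes m :: nat
  assumes "bij_betw \<beta> {1..m} P" "Q \<subseteq> P" "has_sum d Q s"
  shows "has_sum (\<lambda>l. d (\<beta> l)) {l\<in>{1..m}. \<beta> l \<in> Q} s"
proof -
  let ?L = "{l\<in>{1..m}. \<beta> l \<in> Q}"
  have "\<beta> ` ?L = Q"
  proof
    show "\<beta> ` ?L \<subseteq> Q" by blast
    show "Q \<subseteq> \<beta> ` ?L"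
    proof
      fix q assume q: "q \<in> Q"
      then have "q \<in> \<beta> ` {1..m}" using assms(1,2) unfolding bij_betw_def by blast
      then obtain l where "l \<in> {1..m}" "q = \<beta> l" by blast
      then show "q \<in> \<beta> ` ?L" using q by blast
    qed
  qed
  moreover have "inj_on \<beta> ?L" using assms(1) unfolding bij_betw_def by (rule inj_on_subset[OF conjunct1]) blast
  moreover have "finite ?L" by (rule finite_subset[of _ "{1..m}"]) auto
  ultimately show ?thesis using hs_reindex2[of ?L d \<beta> s] assms(3) by simp
qed

lemma rdp_amalg:
  assumes R: "riesz_decomposition pl"
  shows "elem_cat_amalgamated pl u"
  unfolding elem_cat_amalgamated_def
proof (intro allI impI)
  fix ob ob1 ob2 :: "nat \<times> (nat set \<Rightarrow> 'a)" and f1 f2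
  assume H: "elem_obj pl u ob \<and> elem_obj pl u ob1 \<and> elem_obj pl u ob2 \<and> elem_arr ob ob1 f1 \<and> elem_arr ob ob2 f2"
  obtain n g n1 g1 n2 g2 where obs: "ob = (n,g)" "ob1 = (n1,g1)" "ob2 = (n2,g2)" by (cases ob, cases ob1, cases ob2) auto
  have hg: "ea_hom_from_pow pl u n g" and hg1: "ea_hom_from_pow pl u n1 g1" and hg2: "ea_hom_from_pow pl u n2 g2"
    using H obs unfolding elem_obj_def by auto
  have bh1: "bool_hom n n1 f1" and c1: "\<forall>X. X \<subseteq> {1..n} \<longrightarrow> g1 (f1 X) = g X"
    using H obs unfolding elem_arr_def by auto
  have bh2: "bool_hom n n2 f2" and c2: "\<forall>X. X \<subseteq> {1..n} \<longrightarrow> g2 (f2 X) = g X"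
    using H obs unfolding elem_arr_def by auto
  obtain \<phi>1 where p1: "\<forall>j\<in>{1..n1}. \<phi>1 j \<in> {1..n}" "\<forall>X. X \<subseteq> {1..n} \<longrightarrow> f1 X = {j\<in>{1..n1}. \<phi>1 j \<in> X}"
    using bool_hom_rep[OF bh1] by blast
  obtain \<phi>2 where p2: "\<forall>j\<in>{1..n2}. \<phi>2 j \<in> {1..n}" "\<forall>X. X \<subseteq> {1..n} \<longrightarrow> f2 X = {j\<in>{1..n2}. \<phi>2 j \<in> X}"
    using bool_hom_rep[OF bh2] by blast
  define F1 where "F1 i = {j\<in>{1..n1}. \<phi>1 j = i}" for i
  define F2 where "F2 i = {j\<in>{1..n2}. \<phi>2 j = i}" for i
  have s1: "has_sum (\<lambda>j. g1 {j}) (F1 i) (g {i})" if "i \<in> {1..n}" for i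
  proof -
    have "f1 {i} = F1 i" using p1(2) that unfolding F1_def by auto
    moreover have "f1 {i} \<subseteq> {1..n1}" using p1(2) that by auto
    moreover have "g1 (f1 {i}) = g {i}" using c1 that by simp
    ultimately show ?thesis using hom_sum[OF hg1, of "f1 {i}"] by simp
  qed
  have s2: "has_sum (\<lambda>j. g2 {j}) (F2 i) (g {i})" if "i \<in> {1..n}" for i
  proof -
    have "f2 {i} = F2 i" using p2(2) that unfolding F2_def by auto
    moreover have "f2 {i} \<subseteq> {1..n2}" using p2(2) that by auto
    moreover have "g2 (f2 {i}) = g {i}" using c2 that by simp
    ultimately show ?thesis using hom_sum[OF hg2, of "f2 {i}"] by simp
  qed
  have "\<forall>i\<in>{1..n}. \<exists>d. (\<forall>j\<in>F1 i. has_sum (\<lambda>k. d (j,k)) (F2 i) (g1 {j})) \<and>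
                         (\<forall>k\<in>F2 i. has_sum (\<lambda>j. d (j,k)) (F1 i) (g2 {k}))"
  proof
    fix i assume i: "i \<in> {1..n}"
    show "\<exists>d. (\<forall>j\<in>F1 i. has_sum (\<lambda>k. d (j,k)) (F2 i) (g1 {j})) \<and>
                         (\<forall>k\<in>F2 i. has_sum (\<lambda>j. d (j,k)) (F1 i) (g2 {k}))"
      using refine[OF _ R _ s1[OF i] s2[OF i]] unfolding F1_def F2_def by auto
  qed
  then obtain D where D: "\<forall>i\<in>{1..n}. (\<forall>j\<in>F1 i. has_sum (\<lambda>k. D i (j,k)) (F2 i) (g1 {j})) \<and>
                         (\<forall>k\<in>F2 i. has_sum (\<lambda>j. D i (j,k)) (F1 i) (g2 {k}))"
    by (rule bchoice[THEN exE]) assumption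
  define d where "d p = D (\<phi>1 (fst p)) p" for p
  define P where "P = {p. fst p \<in> {1..n1} \<and> snd p \<in> {1..n2} \<and> \<phi>1 (fst p) = \<phi>2 (snd p)}"
  have finP: "finite P"
  proof -
    have "P \<subseteq> {1..n1} \<times> {1..n2}" unfolding P_def by auto
    then show ?thesis using finite_subset by blast
  qed
  have row: "has_sum d ({j} \<times> F2 (\<phi>1 j)) (g1 {j})" if j: "j \<in> {1..n1}" for j
  proof -
    have "j \<in> F1 (\<phi>1 j)" using j unfolding F1_def by auto
    moreover have "\<phi>1 j \<in> {1..n}" using p1(1) j by blast
    ultimately have "has_sum (\<lambda>k. D (\<phi>1 j) (j,k)) (F2 (\<phi>1 j)) (g1 {j})" using D by blast
    moreover have "inj_on (\<lambda>k. (j,k)) (F2 (\<phi>1 j))" by (auto simp: inj_on_def)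
    ultimately have "has_sum d ((\<lambda>k. (j,k)) ` F2 (\<phi>1 j)) (g1 {j})"
      using hs_reindex1[of "\<lambda>k. D (\<phi>1 j) (j,k)" "F2 (\<phi>1 j)" "g1 {j}" d "\<lambda>k. (j,k)"] unfolding d_def by auto
    moreover have "(\<lambda>k. (j,k)) ` F2 (\<phi>1 j) = {j} \<times> F2 (\<phi>1 j)" by auto
    ultimately show ?thesis by simp
  qed
  have col: "has_sum d (F1 (\<phi>2 k) \<times> {k}) (g2 {k})" if k: "k \<in> {1..n2}" for k
  proof -
    have "k \<in> F2 (\<phi>2 k)" using k unfolding F2_def by auto
    moreover have "\<phi>2 k \<in> {1..n}" using p2(1) k by blast
    ultimately have "has_sum (\<lambda>j. D (\<phi>2 k) (j,k)) (F1 (\<phi>2 k)) (g2 {k})" using D by blast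
    moreover have "inj_on (\<lambda>j. (j,k)) (F1 (\<phi>2 k))" by (auto simp: inj_on_def)
    moreover have "\<forall>j\<in>F1 (\<phi>2 k). D (\<phi>2 k) (j,k) = d (j,k)" unfolding d_def F1_def by auto
    ultimately have "has_sum d ((\<lambda>j. (j,k)) ` F1 (\<phi>2 k)) (g2 {k})"
      using hs_reindex1[of "\<lambda>j. D (\<phi>2 k) (j,k)" "F1 (\<phi>2 k)" "g2 {k}" d "\<lambda>j. (j,k)"] by auto
    moreover have "(\<lambda>j. (j,k)) ` F1 (\<phi>2 k) = F1 (\<phi>2 k) \<times> {k}" by auto
    ultimately show ?thesis by simp
  qed
  have hsP: "has_sum d P u"
  proof -
    have "has_sum d (\<Union>j\<in>{1..n1}. {j} \<times> F2 (\<phi>1 j)) u"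
    proof (rule hs_UN)
      show "finite {1..n1}" by simp
      show "\<forall>i\<in>{1..n1}. \<forall>j\<in>{1..n1}. i \<noteq> j \<longrightarrow> {i} \<times> F2 (\<phi>1 i) \<inter> {j} \<times> F2 (\<phi>1 j) = {}" by auto
      show "\<forall>i\<in>{1..n1}. has_sum d ({i} \<times> F2 (\<phi>1 i)) (g1 {i})" using row by blast
      show "has_sum (\<lambda>i. g1 {i}) {1..n1} u" using hom_sum[OF hg1, of "{1..n1}"] hg1
        unfolding ea_hom_from_pow_def by auto
    qed
    moreover have "(\<Union>j\<in>{1..n1}. {j} \<times> F2 (\<phi>1 j)) = P" unfolding P_def F2_def by auto
    ultimately show ?thesis by simp
  qed
  define m where "m = card P"
  obtain \<beta> where bij: "bij_betw \<beta> {1..m} P" using ex_bij_betw_nat_finite_1[OF finP] unfolding m_def by blast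
  have bP: "\<beta> l \<in> P" if "l \<in> {1..m}" for l using bij that unfolding bij_betw_def by auto
  define e where "e l = d (\<beta> l)" for l
  have "has_sum e {l\<in>{1..m}. \<beta> l \<in> P} u" using transport[OF bij _ hsP] unfolding e_def by auto
  moreover have "{l\<in>{1..m}. \<beta> l \<in> P} = {1..m}" using bP by auto
  ultimately have hse: "has_sum e {1..m} u" by simp
  have g3: "ea_hom_from_pow pl u m (G e)" and g3e: "\<forall>l\<in>{1..m}. G e {l} = e l" using G_obj[OF hse] by auto
  define k1 where "k1 = pre (\<lambda>l. fst (\<beta> l)) m"
  define k2 where "k2 = pre (\<lambda>l. snd (\<beta> l)) m"
  have a1: "elem_arr (n1, g1) (m, G e) k1"
    unfolding k1_def
  proof (rule pre_arrow[OF hg1 g3])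
    show "\<forall>j\<in>{1..m}. fst (\<beta> j) \<in> {1..n1}" using bP unfolding P_def by auto
    show "\<forall>i\<in>{1..n1}. has_sum (\<lambda>j. G e {j}) {j \<in> {1..m}. fst (\<beta> j) = i} (g1 {i})"
    proof
      fix i assume i: "i \<in> {1..n1}"
      have "{i} \<times> F2 (\<phi>1 i) \<subseteq> P" using i p1(1) unfolding P_def F2_def by auto
      then have "has_sum e {l\<in>{1..m}. \<beta> l \<in> {i} \<times> F2 (\<phi>1 i)} (g1 {i})"
        using transport[OF bij _ row[OF i]] unfolding e_def by auto
      moreover have "{l\<in>{1..m}. \<beta> l \<in> {i} \<times> F2 (\<phi>1 i)} = {j \<in> {1..m}. fst (\<beta> j) = i}"
        using bP unfolding P_def F2_def by (auto simp: mem_Times_iff)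
      ultimately have H: "has_sum e {j \<in> {1..m}. fst (\<beta> j) = i} (g1 {i})" by simp
      show "has_sum (\<lambda>j. G e {j}) {j \<in> {1..m}. fst (\<beta> j) = i} (g1 {i})"
        by (rule hs_cong[OF H]) (use g3e in auto)
    qed
  qed
  have a2: "elem_arr (n2, g2) (m, G e) k2"
    unfolding k2_def
  proof (rule pre_arrow[OF hg2 g3])
    show "\<forall>j\<in>{1..m}. snd (\<beta> j) \<in> {1..n2}" using bP unfolding P_def by auto
    show "\<forall>i\<in>{1..n2}. has_sum (\<lambda>j. G e {j}) {j \<in> {1..m}. snd (\<beta> j) = i} (g2 {i})"
    proof
      fix i assume i: "i \<in> {1..n2}"
      have "F1 (\<phi>2 i) \<times> {i} \<subseteq> P" using i p2(1) unfolding P_def F1_def by auto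
      then have "has_sum e {l\<in>{1..m}. \<beta> l \<in> F1 (\<phi>2 i) \<times> {i}} (g2 {i})"
        using transport[OF bij _ col[OF i]] unfolding e_def by auto
      moreover have "{l\<in>{1..m}. \<beta> l \<in> F1 (\<phi>2 i) \<times> {i}} = {j \<in> {1..m}. snd (\<beta> j) = i}"
        using bP unfolding P_def F1_def by (auto simp: mem_Times_iff)
      ultimately have H: "has_sum e {j \<in> {1..m}. snd (\<beta> j) = i} (g2 {i})" by simp
      show "has_sum (\<lambda>j. G e {j}) {j \<in> {1..m}. snd (\<beta> j) = i} (g2 {i})"
        by (rule hs_cong[OF H]) (use g3e in auto)
    qed
  qed
  have comm3: "k1 (f1 X) = k2 (f2 X)" if X: "X \<subseteq> {1..n}" for X
  proof -
    have "k1 (f1 X) = {l\<in>{1..m}. fst (\<beta> l) \<in> {1..n1} \<and> \<phi>1 (fst (\<beta> l)) \<in> X}"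
      unfolding k1_def pre_def using p1(2) X by auto
    also have "\<dots> = {l\<in>{1..m}. snd (\<beta> l) \<in> {1..n2} \<and> \<phi>2 (snd (\<beta> l)) \<in> X}"
    proof (rule Collect_cong)
      fix l
      show "(l \<in> {1..m} \<and> fst (\<beta> l) \<in> {1..n1} \<and> \<phi>1 (fst (\<beta> l)) \<in> X) =
            (l \<in> {1..m} \<and> snd (\<beta> l) \<in> {1..n2} \<and> \<phi>2 (snd (\<beta> l)) \<in> X)"
      proof (cases "l \<in> {1..m}")
        case True
        then have "\<beta> l \<in> P" by (rule bP)
        then show ?thesis using True unfolding P_def by simp
      qed auto
    qed
    also have "\<dots> = k2 (f2 X)" unfolding k2_def pre_def using p2(2) X by auto
    finally show ?thesis .
  qed
  show "\<exists>ob3 k1 k2. elem_obj pl u ob3 \<and> elem_arr ob1 ob3 k1 \<and> elem_arr ob2 ob3 k2 \<and>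
           (\<forall>X. X \<subseteq> {1..fst ob} \<longrightarrow> k1 (f1 X) = k2 (f2 X))"
    apply (rule exI[of _ "(m, G e)"], rule exI[of _ k1], rule exI[of _ k2])
    using g3 a1 a2 comm3 obs unfolding elem_obj_def by auto
qed

end


context EA
begin

lemma amalg_rdp:
  assumes A: "elem_cat_amalgamated pl u"
  shows "riesz_decomposition pl"
  unfolding riesz_decomposition_def
proof (intro allI impI)
  fix x v1 v2 s
  assume H: "pl v1 v2 = Some s \<and> ea_le pl x s"
  then have hv: "pl v1 v2 = Some s" by simp
  obtain t where ht: "pl x t = Some s" using H unfolding ea_le_def by blast
  obtain w where hw: "pl s w = Some u" using compl_ex by blast
  define a0 :: "nat \<Rightarrow> 'a" where "a0 i = (if i = 1 then s else w)" for i
  define b :: "nat \<Rightarrow> 'a" where "b i = (if i = 1 then v1 else if i = 2 then v2 else w)" for i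
  define c :: "nat \<Rightarrow> 'a" where "c i = (if i = 1 then x else if i = 2 then t else w)" for i
  have two: "{1..2::nat} = {2,1}" by auto
  have three: "{1..3::nat} = {3,2,1}" by auto
  have ha0: "has_sum a0 {1..2} u"
  proof -
    have "has_sum a0 {1} s" using hs_single[of a0 1] unfolding a0_def by simp
    then have "has_sum a0 {2,1} u" by (rule hs_insert) (use hw in \<open>auto simp: a0_def\<close>)
    then show ?thesis using two by simp
  qed
  have hb12: "has_sum b {2,1} s"
  proof -
    have "has_sum b {1} v1" using hs_single[of b 1] unfolding b_def by simp
    then show "has_sum b {2,1} s" by (rule hs_insert) (use hv in \<open>auto simp: b_def\<close>)
  qed
  have hb: "has_sum b {1..3} u"
  proof -
    have "has_sum b {3,2,1} u" using hb12 by (rule hs_insert) (use hw in \<open>auto simp: b_def\<close>)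
    then show ?thesis using three by simp
  qed
  have hc12: "has_sum c {2,1} s"
  proof -
    have "has_sum c {1} x" using hs_single[of c 1] unfolding c_def by simp
    then show "has_sum c {2,1} s" by (rule hs_insert) (use ht in \<open>auto simp: c_def\<close>)
  qed
  have hc: "has_sum c {1..3} u"
  proof -
    have "has_sum c {3,2,1} u" using hc12 by (rule hs_insert) (use hw in \<open>auto simp: c_def\<close>)
    then show ?thesis using three by simp
  qed
  obtain Ga: "ea_hom_from_pow pl u 2 (G a0)" "\<forall>i\<in>{1..2}. G a0 {i} = a0 i" using G_obj[OF ha0] by blast
  obtain Gb: "ea_hom_from_pow pl u 3 (G b)" "\<forall>i\<in>{1..3}. G b {i} = b i" using G_obj[OF hb] by blast
  obtain Gc: "ea_hom_from_pow pl u 3 (G c)" "\<forall>i\<in>{1..3}. G c {i} = c i" using G_obj[OF hc] by blast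
  define \<phi> :: "nat \<Rightarrow> nat" where "\<phi> j = (if j \<le> 2 then 1 else 2)" for j
  have phi: "\<forall>j\<in>{1..3}. \<phi> j \<in> {1..2}" unfolding \<phi>_def by auto
  have fib1: "{j\<in>{1..3}. \<phi> j = 1} = {2,1}" unfolding \<phi>_def by auto
  have fib2: "{j\<in>{1..3}. \<phi> j = 2} = {3}" unfolding \<phi>_def by auto
  have arrb: "elem_arr (2, G a0) (3, G b) (pre \<phi> 3)"
  proof (rule pre_arrow[OF Ga(1) Gb(1) phi])
    show "\<forall>i\<in>{1..2}. has_sum (\<lambda>j. G b {j}) {j \<in> {1..3}. \<phi> j = i} (G a0 {i})"
    proof
      fix i :: nat assume i: "i \<in> {1..2}"
      then have "i = 1 \<or> i = 2" by auto
      then show "has_sum (\<lambda>j. G b {j}) {j \<in> {1..3}. \<phi> j = i} (G a0 {i})"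
      proof
        assume i1: "i = 1"
        have "has_sum (\<lambda>j. G b {j}) {2,1} s" by (rule hs_cong[OF hb12]) (use Gb(2) in auto)
        then show ?thesis using i1 fib1 Ga(2) by (simp add: a0_def)
      next
        assume i2: "i = 2"
        have "has_sum (\<lambda>j. G b {j}) {3} (G b {3})" by (rule hs_single)
        then show ?thesis using i2 fib2 Ga(2) Gb(2) by (simp add: a0_def b_def)
      qed
    qed
  qed
  have arrc: "elem_arr (2, G a0) (3, G c) (pre \<phi> 3)"
  proof (rule pre_arrow[OF Ga(1) Gc(1) phi])
    show "\<forall>i\<in>{1..2}. has_sum (\<lambda>j. G c {j}) {j \<in> {1..3}. \<phi> j = i} (G a0 {i})"
    proof
      fix i :: nat assume i: "i \<in> {1..2}"
      then have "i = 1 \<or> i = 2" by auto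
      then show "has_sum (\<lambda>j. G c {j}) {j \<in> {1..3}. \<phi> j = i} (G a0 {i})"
      proof
        assume i1: "i = 1"
        have "has_sum (\<lambda>j. G c {j}) {2,1} s" by (rule hs_cong[OF hc12]) (use Gc(2) in auto)
        then show ?thesis using i1 fib1 Ga(2) by (simp add: a0_def)
      next
        assume i2: "i = 2"
        have "has_sum (\<lambda>j. G c {j}) {3} (G c {3})" by (rule hs_single)
        then show ?thesis using i2 fib2 Ga(2) Gc(2) by (simp add: a0_def c_def)
      qed
    qed
  qed
  have objs: "elem_obj pl u (2, G a0)" "elem_obj pl u (3, G b)" "elem_obj pl u (3, G c)"
    unfolding elem_obj_def using Ga Gb Gc by auto
  have ex: "\<exists>ob3 k1 k2. elem_obj pl u ob3 \<and> elem_arr (3, G b) ob3 k1 \<and> elem_arr (3, G c) ob3 k2 \<and>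
           (\<forall>X. X \<subseteq> {1..fst (2::nat, G a0)} \<longrightarrow> k1 (pre \<phi> 3 X) = k2 (pre \<phi> 3 X))"
    using A[unfolded elem_cat_amalgamated_def, rule_format, OF conjI[OF objs(1) conjI[OF objs(2) conjI[OF objs(3) conjI[OF arrb arrc]]]]] .
  then obtain ob3 k1 k2 where am: "elem_obj pl u ob3" "elem_arr (3, G b) ob3 k1" "elem_arr (3, G c) ob3 k2"
    "\<forall>X. X \<subseteq> {1..fst (2::nat, G a0)} \<longrightarrow> k1 (pre \<phi> 3 X) = k2 (pre \<phi> 3 X)"
    by blast
  obtain m g3 where ob3: "ob3 = (m, g3)" by (cases ob3) auto
  have g3: "ea_hom_from_pow pl u m g3" using am(1) ob3 unfolding elem_obj_def by simp
  have k1: "bool_hom 3 m k1" "\<forall>X. X \<subseteq> {1..3} \<longrightarrow> g3 (k1 X) = G b X"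
    using am(2) ob3 unfolding elem_arr_def by auto
  have k2: "bool_hom 3 m k2" "\<forall>X. X \<subseteq> {1..3} \<longrightarrow> g3 (k2 X) = G c X"
    using am(3) ob3 unfolding elem_arr_def by auto
  have pre1: "pre \<phi> 3 {1} = {1,2}" unfolding pre_def \<phi>_def by auto
  have "{1::nat} \<subseteq> {1..fst (2::nat, G a0)}" by simp
  then have "k1 (pre \<phi> 3 {1}) = k2 (pre \<phi> 3 {1})" using am(4) by blast
  then have eq12: "k1 {1,2} = k2 {1,2}" using pre1 by simp
  define B1 where "B1 = k1 {1}"
  define B2 where "B2 = k1 {2}"
  define A0 where "A0 = k2 {1}"
  have s1: "{1::nat} \<subseteq> {1..3}" "{2::nat} \<subseteq> {1..3}" by auto
  have B12: "k1 {1,2} = B1 \<union> B2" using bh_un[OF k1(1) s1] unfolding B1_def B2_def by (simp add: insert_commute)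
  have B12d: "B1 \<inter> B2 = {}" using bh_int[OF k1(1) s1] bh_empty[OF k1(1)] unfolding B1_def B2_def by (simp add: insert_commute)
  have A12: "k2 {1,2} = A0 \<union> k2 {2}" using bh_un[OF k2(1) s1] unfolding A0_def by (simp add: insert_commute)
  have AB: "A0 \<subseteq> B1 \<union> B2" using eq12 B12 A12 by blast
  have B1s: "B1 \<subseteq> {1..m}" using bh_sub[OF k1(1) s1(1)] unfolding B1_def .
  have B2s: "B2 \<subseteq> {1..m}" using bh_sub[OF k1(1) s1(2)] unfolding B2_def .
  have As: "A0 \<subseteq> {1..m}" using bh_sub[OF k2(1) s1(1)] unfolding A0_def .
  have gA: "g3 A0 = x" using k2(2) s1(1) Gc(2) unfolding A0_def by (simp add: c_def)
  have gB1: "g3 B1 = v1" using k1(2) s1(1) Gb(2) unfolding B1_def by (simp add: b_def)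
  have gB2: "g3 B2 = v2" using k1(2) s1(2) Gb(2) unfolding B2_def by (simp add: b_def)
  have add: "pl (g3 X) (g3 Y) = Some (g3 (X \<union> Y))" if "X \<subseteq> {1..m}" "Y \<subseteq> {1..m}" "X \<inter> Y = {}" for X Y
    using g3 that unfolding ea_hom_from_pow_def by blast
  have "pl (g3 (A0 \<inter> B1)) (g3 (A0 \<inter> B2)) = Some (g3 ((A0 \<inter> B1) \<union> (A0 \<inter> B2)))"
    by (rule add) (use As B12d in blast)+
  moreover have "(A0 \<inter> B1) \<union> (A0 \<inter> B2) = A0" using AB by blast
  ultimately have sum: "pl (g3 (A0 \<inter> B1)) (g3 (A0 \<inter> B2)) = Some x" using gA by simp
  have "pl (g3 (A0 \<inter> B1)) (g3 (B1 - A0)) = Some (g3 ((A0 \<inter> B1) \<union> (B1 - A0)))"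
    by (rule add) (use B1s in blast)+
  moreover have "(A0 \<inter> B1) \<union> (B1 - A0) = B1" by blast
  ultimately have le1: "ea_le pl (g3 (A0 \<inter> B1)) v1" using gB1 unfolding ea_le_def by auto
  have "pl (g3 (A0 \<inter> B2)) (g3 (B2 - A0)) = Some (g3 ((A0 \<inter> B2) \<union> (B2 - A0)))"
    by (rule add) (use B2s in blast)+
  moreover have "(A0 \<inter> B2) \<union> (B2 - A0) = B2" by blast
  ultimately have le2: "ea_le pl (g3 (A0 \<inter> B2)) v2" using gB2 unfolding ea_le_def by auto
  show "\<exists>x1 x2. ea_le pl x1 v1 \<and> ea_le pl x2 v2 \<and> pl x1 x2 = Some x"
    using le1 le2 sum by blast
qed

end


theorem mainTheorem2:
  fixes pl :: "'a \<Rightarrow> 'a \<Rightarrow> 'a option" and z u :: 'a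
  assumes "effect_algebra pl z u"
  shows "riesz_decomposition pl \<longleftrightarrow> elem_cat_amalgamated pl u"
proof -
  interpret EA pl z u using assms by unfold_locales
  show ?thesis using rdp_amalg amalg_rdp by blast
qed

end
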